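(* Let $\tau$ be a transportation cost. There exists a constant $\lambda>0$ (depending on $\tau$) such that $d_\tau(\mu_+,\mu_-)\ge\lambda\,W_1(\mu_+,\mu_-)$ for all probability measures $\mu_+,\mu_-$ on $\mathbb{R}^n$.
   Context: Transportation cost: $\tau:[0,\infty)\to[0,\infty)$, $\tau(0)=0$, $\tau(w)>0$ for $w>0$, non-decreasing, subadditive, lower semi-continuous. $W_1(\mu_+,\mu_-)=\sup\{\int f\,d(\mu_+-\mu_-): f\text{ 1-Lipschitz}\}$. A discrete finite mass is $\sum_{i=1}^ka_i\delta_{x_i}$, $a_i>0$. A discrete mass flux $G$ between discrete finite masses $\nu_+,\nu_-$ of equal mass is a finite weighted directed graph with straight oriented edges $e$ (initial point $e^+$, final point $e^-$), weights $w(e)\ge0$ and $\nu_+(\{v\})+\sum_{e^-=v}w(e)=\nu_-(\{v\})+\sum_{e^+=v}w(e)$ for all $v\in V(G)\cup\operatorname{spt}\nu_\pm$; flux $\mathcal F_G=\sum_ew(e)\hat e\,\mathcal H^1\llcorner e$, $\hat e=(e^--e^+)/|e^--e^+|$; cost $J^\tau(G)=\sum_e\tau(w(e))\ell(e)$. For an $\mathbb{R}^n$-valued finite Borel measure $\mathcal F$, $J^{\tau,\mu_+,\mu_-}[\mathcal F]$ is the infimum of $\liminf_kJ^\tau(G_k)$ over sequences of discrete finite masses $\mu^k_\pm\rightharpoonup^*\mu_\pm$ and discrete mass fluxes $G_k$ between $\mu_+^k,\mu_-^k$ with $\mathcal F_{G_k}\rightharpoonup^*\mathcal F$ ($+\infty$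 if none); the cost distance is $d_\tau(\mu_+,\mu_-)=\inf_{\mathcal F}J^{\tau,\mu_+,\mu_-}[\mathcal F]$. *)

theory Defs
  imports "HOL-Probability.Probability"
begin

definition transportation_cost :: "(real \<Rightarrow> real) \<Rightarrow> bool" where
  "transportation_cost \<tau> \<longleftrightarrow>
     (\<forall>w\<ge>0. \<tau> w \<ge> 0) \<and>
     \<tau> 0 = 0 \<and>
     (\<forall>w>0. \<tau> w > 0) \<and>
     (\<forall>v w. 0 \<le> v \<longrightarrow> v \<le> w \<longrightarrow> \<tau> v \<le> \<tau> w) \<and>
     (\<forall>v w. 0 \<le> v \<longrightarrow> 0 \<le> w \<longrightarrow> \<tau> (v + w) \<le> \<tau> v + \<tau> w) \<and>
     (\<forall>w\<ge>0. \<forall>X. (\<forall>k. X k \<ge> 0) \<longrightarrow> X \<longlonglongrightarrow> w \<longrightarrow>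
         ereal (\<tau> w) \<le> liminf (\<lambda>k. ereal (\<tau> (X k))))"

definition c0_fun :: "('a::euclidean_space \<Rightarrow> 'b::real_normed_vector) \<Rightarrow> bool" where
  "c0_fun \<phi> \<longleftrightarrow> continuous_on UNIV \<phi> \<and> (\<phi> \<longlongrightarrow> 0) at_infinity"

definition lipschitz1 :: "('a::euclidean_space \<Rightarrow> real) \<Rightarrow> bool" where
  "lipschitz1 f \<longleftrightarrow> (\<forall>x y. \<bar>f x - f y\<bar> \<le> dist x y)"

definition W1 :: "'a::euclidean_space measure \<Rightarrow> 'a measure \<Rightarrow> ereal" where
  "W1 \<mu>p \<mu>m = (SUP f \<in> {f. lipschitz1 f \<and> integrable \<mu>p f \<and> integrable \<mu>m f}.
                   ereal (integral\<^sup>L \<mu>p f - integral\<^sup>L \<mu>m f))"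

text \<open>A discrete finite mass sum a_i delta_{x_i} is represented by its (finitely supported,
  nonnegative) mass function x |-> mu({x}).\<close>

definition dm_support :: "('a \<Rightarrow> real) \<Rightarrow> 'a set" where
  "dm_support m = {x. m x \<noteq> 0}"

definition discrete_mass :: "('a \<Rightarrow> real) \<Rightarrow> bool" where
  "discrete_mass m \<longleftrightarrow> finite (dm_support m) \<and> (\<forall>x. m x \<ge> 0)"

definition dm_total :: "('a \<Rightarrow> real) \<Rightarrow> real" where
  "dm_total m = (\<Sum>x\<in>dm_support m. m x)"

definition dm_pair :: "('a \<Rightarrow> real) \<Rightarrow> ('a \<Rightarrow> real) \<Rightarrow> real" where
  "dm_pair m \<phi> = (\<Sum>x\<in>dm_support m. m x * \<phi> x)"

definition dm_weak_conv :: "(nat \<Rightarrow> 'a::euclidean_space \<Rightarrow> real) \<Rightarrow> 'a measure \<Rightarrow> bool" where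
  "dm_weak_conv m \<mu> \<longleftrightarrow>
     (\<forall>\<phi>::'a \<Rightarrow> real. c0_fun \<phi> \<longrightarrow> (\<lambda>k. dm_pair (m k) \<phi>) \<longlonglongrightarrow> integral\<^sup>L \<mu> \<phi>)"

text \<open>A discrete mass flux is a finite list of straight oriented edges (e+, e-, w(e)),
  with e+ the initial point, e- the final point, e+ \<noteq> e- and w(e) \<ge> 0.\<close>

type_synonym 'a flux_graph = "('a \<times> 'a \<times> real) list"

definition discrete_mass_flux ::
  "'a::euclidean_space flux_graph \<Rightarrow> ('a \<Rightarrow> real) \<Rightarrow> ('a \<Rightarrow> real) \<Rightarrow> bool" where
  "discrete_mass_flux G \<nu>p \<nu>m \<longleftrightarrow>
     discrete_mass \<nu>p \<and> discrete_mass \<nu>m \<and> dm_total \<nu>p = dm_total \<nu>m \<and>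
     (\<forall>(p, q, w) \<in> set G. p \<noteq> q \<and> w \<ge> 0) \<and>
     (\<forall>v. \<nu>p v + sum_list (map (\<lambda>(p, q, w). if q = v then w else 0) G)
        = \<nu>m v + sum_list (map (\<lambda>(p, q, w). if p = v then w else 0) G))"

text \<open>Pairing of the flux F_G = sum_e w(e) e^ H^1|e with a vector test function phi:
  integral over e of phi . e^ dH^1 = integral_0^1 phi(e+ + t(e- - e+)) . (e- - e+) dt.\<close>

definition flux_pair :: "'a::euclidean_space flux_graph \<Rightarrow> ('a \<Rightarrow> 'a) \<Rightarrow> real" where
  "flux_pair G \<phi> = sum_list (map (\<lambda>(p, q, w).
       w * integral {0..1} (\<lambda>t::real. \<phi> (p + t *\<^sub>R (q - p)) \<bullet> (q - p))) G)"

definition flux_cost :: "(real \<Rightarrow> real) \<Rightarrow> 'a::euclidean_space flux_graph \<Rightarrow> real" where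
  "flux_cost \<tau> G = sum_list (map (\<lambda>(p, q, w). \<tau> w * dist p q) G)"

text \<open>An R^n-valued finite Borel measure F is represented componentwise (w.r.t. the basis)
  by the Jordan decomposition F_i = F_i^+ - F_i^- into finite Borel measures.\<close>

type_synonym 'a vec_measure = "'a \<Rightarrow> 'a measure \<times> 'a measure"

definition is_vec_measure :: "'a::euclidean_space vec_measure \<Rightarrow> bool" where
  "is_vec_measure F \<longleftrightarrow> (\<forall>i\<in>Basis.
      finite_measure (fst (F i)) \<and> sets (fst (F i)) = sets borel \<and>
      finite_measure (snd (F i)) \<and> sets (snd (F i)) = sets borel)"

definition vm_pair :: "'a::euclidean_space vec_measure \<Rightarrow> ('a \<Rightarrow> 'a) \<Rightarrow> real" where
  "vm_pair F \<phi> = (\<Sum>i\<in>Basis. integral\<^sup>L (fst (F i)) (\<lambda>x. \<phi> x \<bullet> i)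
                             - integral\<^sup>L (snd (F i)) (\<lambda>x. \<phi> x \<bullet> i))"

definition flux_weak_conv :: "(nat \<Rightarrow> 'a::euclidean_space flux_graph) \<Rightarrow> 'a vec_measure \<Rightarrow> bool" where
  "flux_weak_conv G F \<longleftrightarrow>
     (\<forall>\<phi>::'a \<Rightarrow> 'a. c0_fun \<phi> \<longrightarrow> (\<lambda>k. flux_pair (G k) \<phi>) \<longlonglongrightarrow> vm_pair F \<phi>)"

definition J_tau :: "(real \<Rightarrow> real) \<Rightarrow> 'a::euclidean_space measure \<Rightarrow> 'a measure \<Rightarrow> 'a vec_measure \<Rightarrow> ereal" where
  "J_tau \<tau> \<mu>p \<mu>m F = Inf {liminf (\<lambda>k. ereal (flux_cost \<tau> (G k))) | G mp mm.
       (\<forall>k. discrete_mass_flux (G k) (mp k) (mm k)) \<and>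
       dm_weak_conv mp \<mu>p \<and> dm_weak_conv mm \<mu>m \<and> flux_weak_conv G F}"

definition d_tau :: "(real \<Rightarrow> real) \<Rightarrow> 'a::euclidean_space measure \<Rightarrow> 'a measure \<Rightarrow> ereal" where
  "d_tau \<tau> \<mu>p \<mu>m = (INF F \<in> {F. is_vec_measure F}. J_tau \<tau> \<mu>p \<mu>m F)"

definition prob_measure_Rn :: "'a::euclidean_space measure \<Rightarrow> bool" where
  "prob_measure_Rn \<mu> \<longleftrightarrow> prob_space \<mu> \<and> sets \<mu> = sets borel"

end

theory Submission
  imports Defs
begin


lemma tau_mult:
  assumes tc: "transportation_cost \<tau>" and w: "w \<ge> 0"
  shows "\<tau> (real n * w) \<le> real n * \<tau> w"
proof (induction n)
  case 0 then show ?case using tc by (simp add: transportation_cost_def)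
next
  case (Suc n)
  have "\<tau> (real (Suc n) * w) = \<tau> (real n * w + w)" by (simp add: algebra_simps)
  also have "\<dots> \<le> \<tau> (real n * w) + \<tau> w" using tc w by (simp add: transportation_cost_def)
  also have "\<dots> \<le> real (Suc n) * \<tau> w" using Suc by (simp add: algebra_simps)
  finally show ?case .
qed

lemma tau_lower:
  assumes tc: "transportation_cost \<tau>"
  shows "\<exists>c>0. \<forall>w\<ge>0. c * min w 2 \<le> \<tau> w"
proof -
  have t2: "\<tau> 2 > 0" using tc by (simp add: transportation_cost_def)
  have mono: "\<And>v w. 0 \<le> v \<Longrightarrow> v \<le> w \<Longrightarrow> \<tau> v \<le> \<tau> w" using tc by (simp add: transportation_cost_def)
  have "\<forall>w\<ge>0. \<tau> 2 / 4 * min w 2 \<le> \<tau> w"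
  proof (intro allI impI)
    fix w :: real assume w: "w \<ge> 0"
    show "\<tau> 2 / 4 * min w 2 \<le> \<tau> w"
    proof (cases "w \<ge> 2")
      case True then show ?thesis using mono[of 2 w] t2 by simp
    next
      case False
      show ?thesis
      proof (cases "w = 0")
        case True then show ?thesis using tc by (simp add: transportation_cost_def)
      next
        case False
        then have wp: "w > 0" using w by simp
        define n where "n = nat \<lceil>2 / w\<rceil>"
        have "0 < 2/w" using wp by simp
        then have c0: "0 \<le> \<lceil>2/w\<rceil>" by linarith
        have rn: "real n = real_of_int \<lceil>2/w\<rceil>" using c0 by (simp add: n_def)
        have n1: "real n \<ge> 2 / w" using rn le_of_int_ceiling by simp
        have n2: "real n \<le> 2 / w + 1" using rn of_int_ceiling_le_add_one by simp
        have "2 \<le> real n * w" using n1 wp by (simp add: field_simps)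
        then have "\<tau> 2 \<le> \<tau> (real n * w)" using mono by simp
        also have "\<dots> \<le> real n * \<tau> w" using tau_mult[OF tc w] .
        also have "\<dots> \<le> (4 / w) * \<tau> w"
        proof (rule mult_right_mono)
          show "real n \<le> 4 / w" using n2 \<open>\<not> 2 \<le> w\<close> wp by (simp add: field_simps)
          show "0 \<le> \<tau> w" using tc w by (simp add: transportation_cost_def)
        qed
        finally have "\<tau> 2 \<le> 4 / w * \<tau> w" .
        then have "\<tau> 2 * w \<le> 4 * \<tau> w" using wp by (simp add: field_simps)
        then show ?thesis using \<open>\<not> 2 \<le> w\<close> by (simp add: min_def)
      qed
    qed
  qed
  then show ?thesis using t2 by (intro exI[of _ "\<tau> 2 / 4"]) auto
qed

lemma sum_min_ge:
  fixes x :: "nat \<Rightarrow> real"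
  assumes "finite I" "\<forall>i\<in>I. x i \<ge> 0" "K \<ge> 0"
  shows "min (\<Sum>i\<in>I. x i) K \<le> (\<Sum>i\<in>I. min (x i) K)"
  using assms
proof (induction I rule: finite_induct)
  case empty then show ?case by simp
next
  case (insert a I)
  have s: "(\<Sum>i\<in>I. x i) \<ge> 0" using insert by (simp add: sum_nonneg)
  have "min (\<Sum>i\<in>I. x i) K \<le> (\<Sum>i\<in>I. min (x i) K)" using insert by simp
  moreover have "x a \<ge> 0" using insert by simp
  moreover have t: "(\<Sum>i\<in>I. min (x i) K) \<ge> 0" using insert by (intro sum_nonneg) auto
  ultimately have h: "min (\<Sum>i\<in>I. x i) K \<le> (\<Sum>i\<in>I. min (x i) K)" "x a \<ge> 0" by auto
  have "min (x a + (\<Sum>i\<in>I. x i)) K \<le> min (x a) K + min (\<Sum>i\<in>I. x i) K"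
    using h(2) s insert.prems by (simp add: min_def)
  then show ?case using insert h by simp
qed

lemma layer:
  fixes V :: "'a set" and d :: "'a \<Rightarrow> real" and P Q :: "nat \<Rightarrow> 'a" and W :: "nat \<Rightarrow> real"
  assumes V: "finite V" and PQ: "\<forall>i<n. P i \<in> V \<and> Q i \<in> V" and Wn: "\<forall>i<n. W i \<ge> 0" and K: "K \<ge> 0"
    and cut: "\<And>S. S \<subseteq> V \<Longrightarrow> (\<Sum>v\<in>S. d v) = (\<Sum>i<n. W i * ((if P i \<in> S then 1 else 0) - (if Q i \<in> S then 1 else 0)))"
  shows "(\<forall>t. (\<Sum>v\<in>{v\<in>V. g v > t}. d v) \<le> K) \<Longrightarrow> (\<Sum>v\<in>V. g v * d v) \<le> (\<Sum>i<n. min (W i) K * \<bar>g (P i) - g (Q i)\<bar>)"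
proof (induction "card (g ` V)" arbitrary: g rule: less_induct)
  case less
  have dV: "(\<Sum>v\<in>V. d v) = 0" using cut[of V] PQ by simp
  have rhs0: "0 \<le> (\<Sum>i<n. min (W i) K * \<bar>g (P i) - g (Q i)\<bar>)"
    using Wn K by (intro sum_nonneg) simp
  show ?case
  proof (cases "card (g ` V) \<le> 1")
    case True
    obtain m where m: "\<forall>v\<in>V. g v = m"
    proof (cases "V = {}")
      case True then show ?thesis using that by auto
    next
      case False
      have "card (g ` V) \<noteq> 0" using False V by simp
      then have "card (g ` V) = 1" using True by linarith
      then obtain m where "g ` V = {m}" using card_1_singletonE by blast
      then show ?thesis using that by auto
    qed
    have "(\<Sum>v\<in>V. g v * d v) = (\<Sum>v\<in>V. m * d v)" using m by simp
    also have "\<dots> = 0" using dV by (simp add: sum_distrib_left[symmetric])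
    finally show ?thesis using rhs0 by simp
  next
    case False
    define m where "m = Min (g ` V)"
    define m2 where "m2 = Min (g ` V - {m})"
    have fin: "finite (g ` V)" using V by simp
    have ne: "g ` V \<noteq> {}" using False by auto
    have mV: "m \<in> g ` V" using fin ne m_def by simp
    have ne2: "g ` V - {m} \<noteq> {}"
    proof
      assume "g ` V - {m} = {}"
      then have "g ` V = {m}" using mV by auto
      then show False using False by simp
    qed
    have fin2: "finite (g ` V - {m})" using fin by simp
    have m2V: "m2 \<in> g ` V - {m}" unfolding m2_def by (rule Min_in[OF fin2 ne2])
    have gm: "\<forall>v\<in>V. m \<le> g v" using fin m_def by simp
    have gm2: "\<forall>v\<in>V. g v \<noteq> m \<longrightarrow> m2 \<le> g v" using fin m2_def by simp
    have mm2: "m < m2" using m2V gm by force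
    define g' where "g' v = max (g v) m2" for v
    have img: "g' ` V = g ` V - {m}"
    proof
      show "g' ` V \<subseteq> g ` V - {m}"
        using m2V mm2 gm2 by (auto simp: g'_def max_def)
      show "g ` V - {m} \<subseteq> g' ` V"
      proof
        fix y assume "y \<in> g ` V - {m}"
        then obtain v where v: "v \<in> V" "y = g v" "g v \<noteq> m" by auto
        then have "g' v = y" using gm2 by (auto simp: g'_def max_def)
        then show "y \<in> g' ` V" using v by (metis image_eqI)
      qed
    qed
    have cardlt: "card (g' ` V) < card (g ` V)"
      unfolding img using fin mV by (rule card_Diff1_less)
    have bnd': "\<forall>t. (\<Sum>v\<in>{v\<in>V. g' v > t}. d v) \<le> K"
    proof
      fix t
      show "(\<Sum>v\<in>{v\<in>V. g' v > t}. d v) \<le> K"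
      proof (cases "t < m2")
        case True
        then have "{v\<in>V. g' v > t} = V" by (auto simp: g'_def)
        then show ?thesis using dV K by simp
      next
        case False
        then have "{v\<in>V. g' v > t} = {v\<in>V. g v > t}" by (auto simp: g'_def)
        then show ?thesis using less.prems by simp
      qed
    qed
    have IH: "(\<Sum>v\<in>V. g' v * d v) \<le> (\<Sum>i<n. min (W i) K * \<bar>g' (P i) - g' (Q i)\<bar>)"
      using less.hyps[OF cardlt] bnd' by blast
    define U where "U = {v\<in>V. g v > m}"
    have UV: "U \<subseteq> V" by (auto simp: U_def)
    have gdec: "\<forall>v\<in>V. g v = g' v - (m2 - m) + (m2 - m) * (if v \<in> U then 1 else 0)"
      using gm gm2 mm2 by (auto simp: g'_def U_def max_def)
    have "(\<Sum>v\<in>V. g v * d v) = (\<Sum>v\<in>V. g' v * d v - (m2 - m) * d v + (m2 - m) * (if v \<in> U then d v else 0))"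
    proof (intro sum.cong refl)
      fix v assume "v \<in> V"
      then have "g v = g' v - (m2 - m) + (m2 - m) * (if v \<in> U then 1 else 0)" using gdec by blast
      then show "g v * d v = g' v * d v - (m2 - m) * d v + (m2 - m) * (if v \<in> U then d v else 0)"
        by (simp only: \<open>g v = _\<close>) (cases "v \<in> U"; simp add: algebra_simps)
    qed
    also have "\<dots> = (\<Sum>v\<in>V. g' v * d v) - (m2 - m) * (\<Sum>v\<in>V. d v) + (m2 - m) * (\<Sum>v\<in>V. if v \<in> U then d v else 0)"
      by (simp add: sum.distrib sum_subtractf sum_distrib_left)
    also have "(\<Sum>v\<in>V. if v \<in> U then d v else 0) = (\<Sum>v\<in>U. d v)"
      using sum.inter_restrict[OF V, of d U, symmetric] UV by (metis Int_absorb1)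
    finally have eq1: "(\<Sum>v\<in>V. g v * d v) = (\<Sum>v\<in>V. g' v * d v) + (m2 - m) * (\<Sum>v\<in>U. d v)"
      using dV by simp
    define c where "c i = (if (P i \<in> U) \<noteq> (Q i \<in> U) then 1 else (0::real))" for i
    have "(\<Sum>v\<in>U. d v) = (\<Sum>i<n. W i * ((if P i \<in> U then 1 else 0) - (if Q i \<in> U then 1 else 0)))"
      using cut[OF UV] .
    also have "\<dots> \<le> (\<Sum>i<n. W i * c i)"
      using Wn by (intro sum_mono) (auto simp: c_def)
    finally have dU1: "(\<Sum>v\<in>U. d v) \<le> (\<Sum>i<n. W i * c i)" .
    have dU2: "(\<Sum>v\<in>U. d v) \<le> K" using less.prems U_def by auto
    have "(\<Sum>v\<in>U. d v) \<le> min (\<Sum>i<n. W i * c i) K" using dU1 dU2 by simp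
    also have "\<dots> \<le> (\<Sum>i<n. min (W i * c i) K)"
      using Wn K by (intro sum_min_ge) (auto simp: c_def)
    also have "\<dots> = (\<Sum>i<n. min (W i) K * c i)"
      using K by (intro sum.cong) (auto simp: c_def)
    finally have dU: "(\<Sum>v\<in>U. d v) \<le> (\<Sum>i<n. min (W i) K * c i)" .
    have edge: "\<bar>g (P i) - g (Q i)\<bar> = \<bar>g' (P i) - g' (Q i)\<bar> + (m2 - m) * c i" if "i < n" for i
    proof -
      have "P i \<in> V" "Q i \<in> V" using PQ that by auto
      then have a: "g (P i) = m \<or> m2 \<le> g (P i)" "g (Q i) = m \<or> m2 \<le> g (Q i)"
        and U: "(P i \<in> U) = (m < g (P i))" "(Q i \<in> U) = (m < g (Q i))"
        using gm2 mm2 by (auto simp: U_def)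
      have aux: "\<bar>a - b\<bar> = \<bar>max a m2 - max b m2\<bar> + (m2 - m) * (if (m < a) \<noteq> (m < b) then 1 else 0)"
        if "a = m \<or> m2 \<le> a" "b = m \<or> m2 \<le> b" for a b :: real
        using that mm2 by (elim disjE) (auto simp: max_def abs_if)
      show ?thesis unfolding c_def g'_def U using aux[OF a] .
    qed
    have "(\<Sum>v\<in>V. g v * d v) \<le> (\<Sum>i<n. min (W i) K * \<bar>g' (P i) - g' (Q i)\<bar>) + (m2 - m) * (\<Sum>i<n. min (W i) K * c i)"
      unfolding eq1 using IH dU mm2 by (intro add_mono) auto
    also have "\<dots> = (\<Sum>i<n. min (W i) K * \<bar>g' (P i) - g' (Q i)\<bar> + (m2 - m) * (min (W i) K * c i))"
      by (simp add: sum.distrib sum_distrib_left)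
    also have "\<dots> = (\<Sum>i<n. min (W i) K * \<bar>g (P i) - g (Q i)\<bar>)"
    proof (intro sum.cong refl)
      fix i assume "i \<in> {..<n}"
      then have e: "\<bar>g (P i) - g (Q i)\<bar> = \<bar>g' (P i) - g' (Q i)\<bar> + (m2 - m) * c i" using edge by simp
      show "min (W i) K * \<bar>g' (P i) - g' (Q i)\<bar> + (m2 - m) * (min (W i) K * c i) = min (W i) K * \<bar>g (P i) - g (Q i)\<bar>"
        unfolding e by (simp add: algebra_simps)
    qed
    finally show ?thesis .
  qed
qed

lemma sl_nth: "sum_list (map h xs) = (\<Sum>i<length xs. h (xs ! i))"
  by (simp add: sum_list_sum_nth atLeast0LessThan)

lemma dm_pair_V:
  assumes "discrete_mass m" "dm_support m \<subseteq> V" "finite V"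
  shows "dm_pair m h = (\<Sum>v\<in>V. m v * h v)"
  unfolding dm_pair_def
  by (rule sum.mono_neutral_left) (use assms in \<open>auto simp: dm_support_def\<close>)

lemma flux_bound:
  fixes G :: "'a::euclidean_space flux_graph"
  assumes tc: "\<forall>w\<ge>0. c * min w 2 \<le> \<tau> w" and c: "c > 0"
  and G: "discrete_mass_flux G mp mm"
  and Lip: "\<forall>x y. \<bar>g x - g y\<bar> \<le> 2 * dist x y"
  and phi0: "\<forall>x. 0 \<le> \<phi> x" and phi1: "\<forall>x. g x \<noteq> 0 \<longrightarrow> 1 \<le> \<phi> x"
  and bp: "dm_pair mp \<phi> \<le> 2" and bm: "dm_pair mm \<phi> \<le> 2"
  shows "c / 2 * (dm_pair mp g - dm_pair mm g) \<le> flux_cost \<tau> G"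
proof -
  define n where "n = length G"
  define P where "P i = fst (G ! i)" for i
  define Q where "Q i = fst (snd (G ! i))" for i
  define W where "W i = snd (snd (G ! i))" for i
  have Gi: "G ! i = (P i, Q i, W i)" for i by (simp add: P_def Q_def W_def)
  have dmp: "discrete_mass mp" and dmm: "discrete_mass mm" using G by (auto simp: discrete_mass_flux_def)
  have W0: "\<forall>i<n. W i \<ge> 0"
  proof (intro allI impI)
    fix i assume "i < n"
    then have "G ! i \<in> set G" by (simp add: n_def)
    then show "W i \<ge> 0" using G unfolding discrete_mass_flux_def Gi by auto
  qed
  have bal: "mp v + (\<Sum>i<n. if Q i = v then W i else 0) = mm v + (\<Sum>i<n. if P i = v then W i else 0)" for v
    using G unfolding discrete_mass_flux_def by (simp add: sl_nth Gi n_def)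
  define V where "V = dm_support mp \<union> dm_support mm \<union> P ` {..<n} \<union> Q ` {..<n}"
  have finV: "finite V" using dmp dmm by (simp add: V_def discrete_mass_def)
  have PQ: "\<forall>i<n. P i \<in> V \<and> Q i \<in> V" by (auto simp: V_def)
  have cut: "(\<Sum>v\<in>S. mp v - mm v) = (\<Sum>i<n. W i * ((if P i \<in> S then 1 else 0) - (if Q i \<in> S then 1 else 0)))"
    if "S \<subseteq> V" for S
  proof -
    have finS: "finite S" using that finV finite_subset by blast
    have "(\<Sum>v\<in>S. mp v - mm v) = (\<Sum>v\<in>S. (\<Sum>i<n. if P i = v then W i else 0) - (\<Sum>i<n. if Q i = v then W i else 0))"
      using bal by (intro sum.cong) (auto simp: algebra_simps)
    also have "\<dots> = (\<Sum>i<n. \<Sum>v\<in>S. if P i = v then W i else 0) - (\<Sum>i<n. \<Sum>v\<in>S. if Q i = v then W i else 0)"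
      by (simp add: sum_subtractf sum.swap[of _ S])
    also have "\<dots> = (\<Sum>i<n. if P i \<in> S then W i else 0) - (\<Sum>i<n. if Q i \<in> S then W i else 0)"
      using finS by simp
    also have "\<dots> = (\<Sum>i<n. W i * ((if P i \<in> S then 1 else 0) - (if Q i \<in> S then 1 else 0)))"
      by (simp add: sum_subtractf[symmetric] algebra_simps) (intro sum.cong; simp)
    finally show ?thesis .
  qed
  have dV: "(\<Sum>v\<in>V. mp v - mm v) = 0" using cut[of V] PQ by simp
  have suppV: "dm_support mp \<subseteq> V" "dm_support mm \<subseteq> V" by (auto simp: V_def)
  have pair: "dm_pair mp g - dm_pair mm g = (\<Sum>v\<in>V. g v * (mp v - mm v))"
    using dm_pair_V[OF dmp suppV(1) finV] dm_pair_V[OF dmm suppV(2) finV]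
    by (simp add: sum_subtractf[symmetric] algebra_simps)
  define B where "B = {v\<in>V. g v \<noteq> 0}"
  have massB: "(\<Sum>v\<in>B. m v) \<le> 2" if dm: "discrete_mass m" and sV: "dm_support m \<subseteq> V"
    and b: "dm_pair m \<phi> \<le> 2" for m
  proof -
    have m0: "\<forall>v. m v \<ge> 0" using dm by (simp add: discrete_mass_def)
    have "(\<Sum>v\<in>B. m v) \<le> (\<Sum>v\<in>B. m v * \<phi> v)"
      using m0 phi1 by (intro sum_mono) (auto simp: B_def intro: mult_left_mono[of 1 _ "m _", simplified])
    also have "\<dots> \<le> (\<Sum>v\<in>V. m v * \<phi> v)"
      using m0 phi0 finV by (intro sum_mono2) (auto simp: B_def)
    also have "\<dots> = dm_pair m \<phi>" using dm_pair_V[OF dm sV finV] by simp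
    finally show ?thesis using b by simp
  qed
  have mpB: "(\<Sum>v\<in>B. mp v) \<le> 2" using massB[OF dmp suppV(1) bp] .
  have mmB: "(\<Sum>v\<in>B. mm v) \<le> 2" using massB[OF dmm suppV(2) bm] .
  have mp0: "\<forall>v. mp v \<ge> 0" and mm0: "\<forall>v. mm v \<ge> 0" using dmp dmm by (auto simp: discrete_mass_def)
  have finB: "finite B" using finV by (simp add: B_def)
  have bnd: "\<forall>t. (\<Sum>v\<in>{v\<in>V. g v > t}. mp v - mm v) \<le> 2"
  proof
    fix t :: real
    define S where "S = {v\<in>V. g v > t}"
    show "(\<Sum>v\<in>{v\<in>V. g v > t}. mp v - mm v) \<le> 2"
    proof (cases "t \<ge> 0")
      case True
      have SB: "S \<subseteq> B" using True by (auto simp: S_def B_def)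
      have "(\<Sum>v\<in>S. mp v - mm v) \<le> (\<Sum>v\<in>S. mp v)" using mm0 by (intro sum_mono) auto
      also have "\<dots> \<le> (\<Sum>v\<in>B. mp v)" using SB finB mp0 by (intro sum_mono2) auto
      finally show ?thesis using mpB S_def by simp
    next
      case False
      have SB: "V - S \<subseteq> B" using False by (auto simp: S_def B_def)
      have SV: "S \<subseteq> V" by (auto simp: S_def)
      have "(\<Sum>v\<in>S. mp v - mm v) = (\<Sum>v\<in>V. mp v - mm v) - (\<Sum>v\<in>V - S. mp v - mm v)"
        using sum_diff[OF finV SV, of "\<lambda>v. mp v - mm v"] by simp
      also have "\<dots> = - (\<Sum>v\<in>V - S. mp v - mm v)" using dV by simp
      also have "\<dots> \<le> (\<Sum>v\<in>V - S. mm v)" using mp0 by (simp add: sum_subtractf sum_nonneg)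
      also have "\<dots> \<le> (\<Sum>v\<in>B. mm v)" using SB finB mm0 by (intro sum_mono2) auto
      finally show ?thesis using mmB S_def by simp
    qed
  qed
  have L: "(\<Sum>v\<in>V. g v * (mp v - mm v)) \<le> (\<Sum>i<n. min (W i) 2 * \<bar>g (P i) - g (Q i)\<bar>)"
    by (rule layer[OF finV PQ W0 _ cut bnd]) simp_all
  also have "\<dots> \<le> (\<Sum>i<n. 2 / c * (\<tau> (W i) * dist (P i) (Q i)))"
  proof (intro sum_mono)
    fix i assume "i \<in> {..<n}"
    then have w: "W i \<ge> 0" using W0 by simp
    have m0: "min (W i) 2 \<ge> 0" using w by simp
    have "min (W i) 2 * \<bar>g (P i) - g (Q i)\<bar> \<le> min (W i) 2 * (2 * dist (P i) (Q i))"
      using Lip m0 by (intro mult_left_mono) auto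
    also have "\<dots> = 2 / c * ((c * min (W i) 2) * dist (P i) (Q i))" using c by (simp add: field_simps)
    also have "\<dots> \<le> 2 / c * (\<tau> (W i) * dist (P i) (Q i))"
      using tc w c by (intro mult_left_mono mult_right_mono) auto
    finally show "min (W i) 2 * \<bar>g (P i) - g (Q i)\<bar> \<le> 2 / c * (\<tau> (W i) * dist (P i) (Q i))" .
  qed
  also have "\<dots> = 2 / c * flux_cost \<tau> G"
    by (simp add: flux_cost_def sl_nth Gi n_def sum_distrib_left)
  finally have "dm_pair mp g - dm_pair mm g \<le> 2 / c * flux_cost \<tau> G" using pair by simp
  then show ?thesis using c by (simp add: field_simps)
qed



lemma clamp_lip:
  fixes a b u v :: real
  assumes "a \<le> b"
  shows "\<bar>max a (min b u) - max a (min b v)\<bar> \<le> \<bar>u - v\<bar>"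
  using assms by (auto simp: max_def min_def abs_if)

definition clp :: "real \<Rightarrow> real \<Rightarrow> real" where "clp R u = max (-R) (min R u)"
definition psi :: "real \<Rightarrow> 'a::euclidean_space \<Rightarrow> real" where
  "psi R x = max 0 (min 1 (2 - norm x / R))"
definition phiR :: "real \<Rightarrow> 'a::euclidean_space \<Rightarrow> real" where
  "phiR R x = max 0 (min 1 (3 - norm x / R))"
definition gR :: "real \<Rightarrow> ('a::euclidean_space \<Rightarrow> real) \<Rightarrow> 'a \<Rightarrow> real" where
  "gR R f x = clp R (f x) * psi R x"

lemma clp_bound: "0 \<le> R \<Longrightarrow> \<bar>clp R u\<bar> \<le> R"
  unfolding clp_def abs_le_iff by simp
lemma clp_abs: "0 \<le> R \<Longrightarrow> \<bar>clp R u\<bar> \<le> \<bar>u\<bar>"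
  unfolding clp_def by (simp add: abs_le_iff) linarith

lemma lip1_cont: "lipschitz1 f \<Longrightarrow> continuous_on UNIV f"
  by (rule lipschitz_on_continuous_on[of 1]) (auto intro!: lipschitz_onI simp: lipschitz1_def dist_real_def)

lemma gR_lip:
  assumes f: "lipschitz1 f" and R: "R > 0"
  shows "\<bar>gR R f x - gR R f y\<bar> \<le> 2 * dist x y"
proof -
  have c1: "\<bar>clp R (f x) - clp R (f y)\<bar> \<le> dist x y"
    using clamp_lip[of "-R" R "f x" "f y"] R f by (simp add: clp_def lipschitz1_def) (meson order_trans)
  have cb: "\<bar>clp R (f y)\<bar> \<le> R" using R clp_bound[of R "f y"] by simp
  have p01: "0 \<le> psi R x" "psi R x \<le> 1" by (auto simp: psi_def)
  have "\<bar>psi R x - psi R y\<bar> \<le> \<bar>(2 - norm x / R) - (2 - norm y / R)\<bar>"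
    unfolding psi_def by (rule clamp_lip) simp
  also have "\<dots> = \<bar>(norm y - norm x) / R\<bar>" by (simp add: diff_divide_distrib)
  also have "\<dots> = \<bar>norm x - norm y\<bar> / R" using R by (simp add: abs_divide abs_minus_commute)
  also have "\<dots> \<le> dist x y / R"
    using R norm_triangle_ineq3[of x y] by (simp add: dist_norm divide_right_mono)
  finally have p1: "\<bar>psi R x - psi R y\<bar> \<le> dist x y / R" .
  have "gR R f x - gR R f y = (clp R (f x) - clp R (f y)) * psi R x + clp R (f y) * (psi R x - psi R y)"
    by (simp add: gR_def algebra_simps)
  then have "\<bar>gR R f x - gR R f y\<bar> = \<bar>(clp R (f x) - clp R (f y)) * psi R x + clp R (f y) * (psi R x - psi R y)\<bar>"
    by simp
  also have "\<dots> \<le> \<bar>(clp R (f x) - clp R (f y)) * psi R x\<bar> + \<bar>clp R (f y) * (psi R x - psi R y)\<bar>"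
    by (rule abs_triangle_ineq)
  also have "\<dots> = \<bar>clp R (f x) - clp R (f y)\<bar> * psi R x + \<bar>clp R (f y)\<bar> * \<bar>psi R x - psi R y\<bar>"
    using p01 by (simp add: abs_mult)
  also have "\<dots> \<le> dist x y * 1 + R * (dist x y / R)"
    using c1 cb p1 p01 by (intro add_mono mult_mono) auto
  also have "\<dots> = 2 * dist x y" using R by simp
  finally show ?thesis .
qed

lemma gR_c0:
  assumes f: "lipschitz1 f" and R: "R > 0"
  shows "c0_fun (gR R f)"
  unfolding c0_fun_def
proof
  have "continuous_on UNIV f" using lip1_cont[OF f] .
  then show "continuous_on UNIV (gR R f)"
    unfolding gR_def clp_def psi_def by (intro continuous_intros) (use R in auto)
  have "\<forall>x. 2 * R \<le> norm x \<longrightarrow> gR R f x = 0"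
    using R by (auto simp: gR_def psi_def field_simps)
  then have "eventually (\<lambda>x. gR R f x = 0) at_infinity"
    unfolding eventually_at_infinity by blast
  then show "(gR R f \<longlongrightarrow> 0) at_infinity" by (rule tendsto_eventually)
qed

lemma phiR_c0:
  assumes R: "R > 0"
  shows "c0_fun (phiR R :: 'a::euclidean_space \<Rightarrow> real)"
  unfolding c0_fun_def
proof
  show "continuous_on UNIV (phiR R :: 'a \<Rightarrow> real)"
    unfolding phiR_def by (intro continuous_intros) (use R in auto)
  have "\<forall>x::'a. 3 * R \<le> norm x \<longrightarrow> phiR R x = 0"
    using R by (auto simp: phiR_def field_simps)
  then have "eventually (\<lambda>x::'a. phiR R x = 0) at_infinity"
    unfolding eventually_at_infinity by blast
  then show "((phiR R :: 'a \<Rightarrow> real) \<longlongrightarrow> 0) at_infinity" by (rule tendsto_eventually)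
qed

lemma phiR_props:
  assumes R: "R > 0"
  shows "0 \<le> phiR R x" "phiR R x \<le> 1" "gR R f x \<noteq> 0 \<Longrightarrow> 1 \<le> phiR R x"
proof -
  show "0 \<le> phiR R x" "phiR R x \<le> 1" by (auto simp: phiR_def)
  assume "gR R f x \<noteq> 0"
  then have "psi R x \<noteq> 0" by (auto simp: gR_def)
  then have "norm x / R < 2" by (auto simp: psi_def max_def min_def split: if_splits)
  then show "1 \<le> phiR R x" by (auto simp: phiR_def)
qed

lemma gR_bound: "R > 0 \<Longrightarrow> \<bar>gR R f x\<bar> \<le> \<bar>f x\<bar>"
proof -
  assume R: "R > 0"
  have "\<bar>clp R (f x)\<bar> \<le> \<bar>f x\<bar>" using R clp_abs[of R "f x"] by simp
  moreover have "0 \<le> psi R x" "psi R x \<le> 1" by (auto simp: psi_def)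
  ultimately show ?thesis unfolding gR_def abs_mult
    by (metis abs_ge_zero abs_of_nonneg mult_le_cancel_left1 order_trans mult.commute mult_right_le_one_le)
qed

lemma gR_lim: "(\<lambda>j. gR (real (Suc j)) f x) \<longlonglongrightarrow> f x"
proof (rule tendsto_eventually)
  obtain N :: nat where N: "\<bar>f x\<bar> + norm x \<le> real N" using real_arch_simple by blast
  show "\<forall>\<^sub>F j in sequentially. gR (real (Suc j)) f x = f x"
    unfolding eventually_sequentially
  proof (intro exI allI impI)
    fix j assume "N \<le> j"
    then have j: "\<bar>f x\<bar> + norm x \<le> real (Suc j)" using N by linarith
    then have "\<bar>f x\<bar> \<le> real (Suc j)" using norm_ge_zero[of x] by linarith
    then have "clp (real (Suc j)) (f x) = f x" unfolding clp_def by (simp add: abs_le_iff min_absorb2 max_absorb2)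
    moreover have "norm x / real (Suc j) \<le> 1" using j by (simp add: field_simps)
    then have "psi (real (Suc j)) x = 1" by (auto simp: psi_def)
    ultimately show "gR (real (Suc j)) f x = f x" by (simp add: gR_def)
  qed
qed



lemma cont_meas:
  assumes "sets \<mu> = sets borel" "continuous_on UNIV h"
  shows "h \<in> borel_measurable \<mu>"
  using borel_measurable_continuous_onI[OF assms(2)] measurable_cong_sets[OF assms(1), of borel borel]
  by metis

lemma phi_int:
  assumes "prob_measure_Rn \<mu>" "R > 0"
  shows "integral\<^sup>L \<mu> (phiR R :: 'a::euclidean_space \<Rightarrow> real) \<le> 1"
proof -
  interpret prob_space \<mu> using assms by (simp add: prob_measure_Rn_def)
  have meas: "(phiR R :: 'a \<Rightarrow> real) \<in> borel_measurable \<mu>"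
    using cont_meas[of \<mu> "phiR R"] phiR_c0[OF assms(2)] assms(1)
    unfolding prob_measure_Rn_def c0_fun_def by blast
  have "integrable \<mu> (phiR R :: 'a \<Rightarrow> real)"
  proof (rule integrable_const_bound[where B=1])
    show "AE x in \<mu>. norm (phiR R x :: real) \<le> 1"
    proof (intro AE_I2)
      fix x
      have "0 \<le> phiR R x" "phiR R x \<le> 1" using phiR_props(1,2)[OF assms(2)] by auto
      then show "norm (phiR R x :: real) \<le> 1" by simp
    qed
  qed (rule meas)
  then show ?thesis by (rule integral_le_const) (use phiR_props[OF assms(2)] in auto)
qed

lemma per_R:
  fixes \<mu>p \<mu>m :: "'a::euclidean_space measure"
  assumes c: "c > 0" and tc: "\<forall>w\<ge>0. c * min w 2 \<le> \<tau> w"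
  and pp: "prob_measure_Rn \<mu>p" and pm: "prob_measure_Rn \<mu>m"
  and Gs: "\<forall>k. discrete_mass_flux (G k) (mp k) (mm k)"
  and wp: "dm_weak_conv mp \<mu>p" and wm: "dm_weak_conv mm \<mu>m"
  and f: "lipschitz1 f" and R: "R > 0"
  shows "ereal (c/2 * (integral\<^sup>L \<mu>p (gR R f) - integral\<^sup>L \<mu>m (gR R f))) \<le> liminf (\<lambda>k. ereal (flux_cost \<tau> (G k)))"
proof -
  define g where "g = gR R f"
  define \<phi> where "\<phi> = (phiR R :: 'a \<Rightarrow> real)"
  have gc: "c0_fun g" unfolding g_def by (rule gR_c0[OF f R])
  have pc: "c0_fun \<phi>" unfolding \<phi>_def by (rule phiR_c0[OF R])
  have t1: "(\<lambda>k. dm_pair (mp k) g) \<longlonglongrightarrow> integral\<^sup>L \<mu>p g" using wp gc by (simp add: dm_weak_conv_def)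
  have t2: "(\<lambda>k. dm_pair (mm k) g) \<longlonglongrightarrow> integral\<^sup>L \<mu>m g" using wm gc by (simp add: dm_weak_conv_def)
  have s1: "(\<lambda>k. dm_pair (mp k) \<phi>) \<longlonglongrightarrow> integral\<^sup>L \<mu>p \<phi>" using wp pc by (simp add: dm_weak_conv_def)
  have s2: "(\<lambda>k. dm_pair (mm k) \<phi>) \<longlonglongrightarrow> integral\<^sup>L \<mu>m \<phi>" using wm pc by (simp add: dm_weak_conv_def)
  have i1: "integral\<^sup>L \<mu>p \<phi> < 2" using phi_int[OF pp R] by (simp add: \<phi>_def)
  have i2: "integral\<^sup>L \<mu>m \<phi> < 2" using phi_int[OF pm R] by (simp add: \<phi>_def)
  have e1: "eventually (\<lambda>k. dm_pair (mp k) \<phi> < 2) sequentially" by (rule order_tendstoD(2)[OF s1 i1])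
  have e2: "eventually (\<lambda>k. dm_pair (mm k) \<phi> < 2) sequentially" by (rule order_tendstoD(2)[OF s2 i2])
  have ev: "eventually (\<lambda>k. ereal (c/2 * (dm_pair (mp k) g - dm_pair (mm k) g)) \<le> ereal (flux_cost \<tau> (G k))) sequentially"
    using e1 e2
  proof eventually_elim
    case (elim k)
    have "c / 2 * (dm_pair (mp k) g - dm_pair (mm k) g) \<le> flux_cost \<tau> (G k)"
    proof (rule flux_bound[OF tc c])
      show "discrete_mass_flux (G k) (mp k) (mm k)" using Gs by simp
      show "\<forall>x y. \<bar>g x - g y\<bar> \<le> 2 * dist x y" unfolding g_def using gR_lip[OF f R] by blast
      show "\<forall>x. 0 \<le> \<phi> x" unfolding \<phi>_def using phiR_props(1)[OF R] by blast
      show "\<forall>x. g x \<noteq> 0 \<longrightarrow> 1 \<le> \<phi> x" unfolding \<phi>_def g_def using phiR_props(3)[OF R] by blast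
      show "dm_pair (mp k) \<phi> \<le> 2" "dm_pair (mm k) \<phi> \<le> 2" using elim by auto
    qed
    then show ?case by simp
  qed
  have lim: "(\<lambda>k. ereal (c/2 * (dm_pair (mp k) g - dm_pair (mm k) g))) \<longlonglongrightarrow> ereal (c/2 * (integral\<^sup>L \<mu>p g - integral\<^sup>L \<mu>m g))"
    using t1 t2 by (simp add: tendsto_intros)
  have "ereal (c/2 * (integral\<^sup>L \<mu>p g - integral\<^sup>L \<mu>m g)) = liminf (\<lambda>k. ereal (c/2 * (dm_pair (mp k) g - dm_pair (mm k) g)))"
    using lim_imp_Liminf[OF trivial_limit_sequentially lim] by simp
  also have "\<dots> \<le> liminf (\<lambda>k. ereal (flux_cost \<tau> (G k)))" by (rule Liminf_mono[OF ev])
  finally show ?thesis by (simp add: g_def)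
qed

lemma per_f:
  fixes \<mu>p \<mu>m :: "'a::euclidean_space measure"
  assumes c: "c > 0" and tc: "\<forall>w\<ge>0. c * min w 2 \<le> \<tau> w"
  and pp: "prob_measure_Rn \<mu>p" and pm: "prob_measure_Rn \<mu>m"
  and Gs: "\<forall>k. discrete_mass_flux (G k) (mp k) (mm k)"
  and wp: "dm_weak_conv mp \<mu>p" and wm: "dm_weak_conv mm \<mu>m"
  and f: "lipschitz1 f" and ip: "integrable \<mu>p f" and im: "integrable \<mu>m f"
  shows "ereal (c/2 * (integral\<^sup>L \<mu>p f - integral\<^sup>L \<mu>m f)) \<le> liminf (\<lambda>k. ereal (flux_cost \<tau> (G k)))"
proof -
  have conv: "(\<lambda>j. integral\<^sup>L \<mu> (gR (real (Suc j)) f)) \<longlonglongrightarrow> integral\<^sup>L \<mu> f"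
    if pr: "prob_measure_Rn \<mu>" and i: "integrable \<mu> f" for \<mu> :: "'a measure"
  proof (rule integral_dominated_convergence[where w="\<lambda>x. \<bar>f x\<bar>"])
    have s: "sets \<mu> = sets borel" using pr by (simp add: prob_measure_Rn_def)
    show "f \<in> borel_measurable \<mu>" using i by simp
    show "gR (real (Suc j)) f \<in> borel_measurable \<mu>" for j
      using cont_meas[OF s, of "gR (real (Suc j)) f"] gR_c0[OF f, of "real (Suc j)"] unfolding c0_fun_def by simp
    show "integrable \<mu> (\<lambda>x. \<bar>f x\<bar>)" using i by simp
    show "AE x in \<mu>. (\<lambda>j. gR (real (Suc j)) f x) \<longlonglongrightarrow> f x" by (intro AE_I2 gR_lim)
    show "AE x in \<mu>. norm (gR (real (Suc j)) f x) \<le> \<bar>f x\<bar>" for j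
      using gR_bound[of "real (Suc j)" f] by simp
  qed
  have L: "(\<lambda>j. ereal (c/2 * (integral\<^sup>L \<mu>p (gR (real (Suc j)) f) - integral\<^sup>L \<mu>m (gR (real (Suc j)) f))))
      \<longlonglongrightarrow> ereal (c/2 * (integral\<^sup>L \<mu>p f - integral\<^sup>L \<mu>m f))"
    using conv[OF pp ip] conv[OF pm im] by (simp add: tendsto_intros)
  show ?thesis
    by (rule LIMSEQ_le_const2[OF L]) (use per_R[OF c tc pp pm Gs wp wm f] in auto)
qed



theorem mainTheorem18:
  fixes \<tau> :: "real \<Rightarrow> real"
  assumes "transportation_cost \<tau>"
  shows "\<exists>c::real. c > 0 \<and>
           (\<forall>\<mu>p \<mu>m :: 'a::euclidean_space measure.
              prob_measure_Rn \<mu>p \<longrightarrow> prob_measure_Rn \<mu>m \<longrightarrow>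
              d_tau \<tau> \<mu>p \<mu>m \<ge> ereal c * W1 \<mu>p \<mu>m)"
proof -
  obtain c where c: "c > 0" and tc: "\<forall>w\<ge>0. c * min w 2 \<le> \<tau> w" using tau_lower[OF assms] by blast
  show ?thesis
  proof (intro exI[of _ "c/2"] conjI allI impI)
    show "c/2 > 0" using c by simp
    fix \<mu>p \<mu>m :: "'a measure" assume pp: "prob_measure_Rn \<mu>p" and pm: "prob_measure_Rn \<mu>m"
    define A where "A = {f. lipschitz1 f \<and> integrable \<mu>p f \<and> integrable \<mu>m f}"
    have Ane: "A \<noteq> {}"
    proof -
      have "(\<lambda>_. 0::real) \<in> A" by (simp add: A_def lipschitz1_def)
      then show ?thesis by blast
    qed
    have W: "ereal (c/2) * W1 \<mu>p \<mu>m = (SUP f\<in>A. ereal (c/2) * ereal (integral\<^sup>L \<mu>p f - integral\<^sup>L \<mu>m f))"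
      unfolding W1_def A_def[symmetric] using Sup_ereal_mult_left'[OF Ane, of "c/2"] c by simp
    show "ereal (c/2) * W1 \<mu>p \<mu>m \<le> d_tau \<tau> \<mu>p \<mu>m"
      unfolding d_tau_def J_tau_def
    proof (intro INF_greatest Inf_greatest)
      fix F x
      assume "x \<in> {liminf (\<lambda>k. ereal (flux_cost \<tau> (G k))) | G mp mm.
       (\<forall>k. discrete_mass_flux (G k) (mp k) (mm k)) \<and>
       dm_weak_conv mp \<mu>p \<and> dm_weak_conv mm \<mu>m \<and> flux_weak_conv G F}"
      then obtain G mp mm where x: "x = liminf (\<lambda>k. ereal (flux_cost \<tau> (G k)))"
        and Gs: "\<forall>k. discrete_mass_flux (G k) (mp k) (mm k)"
        and wp: "dm_weak_conv mp \<mu>p" and wm: "dm_weak_conv mm \<mu>m" by blast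
      show "ereal (c/2) * W1 \<mu>p \<mu>m \<le> x"
        unfolding W x
      proof (rule SUP_least)
        fix f assume "f \<in> A"
        then have f: "lipschitz1 f" "integrable \<mu>p f" "integrable \<mu>m f" by (auto simp: A_def)
        show "ereal (c/2) * ereal (integral\<^sup>L \<mu>p f - integral\<^sup>L \<mu>m f) \<le> liminf (\<lambda>k. ereal (flux_cost \<tau> (G k)))"
          using per_f[OF c tc pp pm Gs wp wm f] by simp
      qed
    qed
  qed
qed

end
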